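(* In the setting of the context, the following two conditions are equivalent: (MC1) for every continuous path $c:[0,\epsilon)\to G$ with $c(0)=e$, the path $t\mapsto \Xi(J_0\cdot c(t))$ in $K$ is constant equal to $J_0$; (MC2) up to shrinking $W$, for $g\in W$, $J_0\cdot g\in K$ implies $J_0\cdot g=J_0$.
   Context: $X$ is a compact connected smooth manifold, $\mathcal E$ a Banach manifold, $\mathcal I\subset\mathcal E$ a closed subset, $G$ a topological group with countable topology acting continuously on the right on $\mathcal E$ by smooth transformations preserving $\mathcal I$, $J_0\in\mathcal I$, $e$ the identity of $G$. There are a Banach space $T$, a homeomorphism $\phi:V\to W$ from a connected open neighbourhood $V$ of $0\in T$ onto a connected open neighbourhood $W$ of $e$, and a connected open neighbourhood $U$ of $J_0$ such that $(\xi,J)\mapsto J\cdot\phi(\xi)$ is smooth on $V\times U$, with differential $L$ at $(0,J_0)$; $\mathfrak e=\{\xi: L(\xi,0)=0\}$. Assume $\mathfrak e$ has a closed complement $\mathfrak e^\perp$ in $T$, $L(\xi,\omega)=\omega+P\xi$ with $P:T\to T_{J_0}\mathcal E$ bounded linear, and $\operatorname{Im}P$ is closed with closed complement $F^\perp$. Let $\tilde K\subset U$ be a submanifold through $J_0$ tangent to $F^\perp$, $K=\tilde K\cap\mathcal I$, and (after shrinking) let $\Phi(\xi,J)=J\cdot\phi(\xi)$ be an isomorphism from $(\mathfrak e^\perp\cap V)\times K$ onto $U\cap\mathcal I$. The retraction $\Xi:U\cap\mathcal I\to K$ is the second component of $\Phi^{-1}$. *)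

theory Defs
  imports "HOL-Analysis.Analysis"
begin

definition PhiMap :: "('e \<Rightarrow> 'g \<Rightarrow> 'e) \<Rightarrow> ('t \<Rightarrow> 'g) \<Rightarrow> 't \<times> 'e \<Rightarrow> 'e" where
  "PhiMap act \<phi> = (\<lambda>(\<xi>, J). act J (\<phi> \<xi>))"

definition Xi :: "('e \<Rightarrow> 'g \<Rightarrow> 'e) \<Rightarrow> ('t \<Rightarrow> 'g) \<Rightarrow> 't set \<Rightarrow> 't set \<Rightarrow> 'e set \<Rightarrow> 'e \<Rightarrow> 'e" where
  "Xi act \<phi> Eperp V K J = snd (inv_into ((Eperp \<inter> V) \<times> K) (PhiMap act \<phi>) J)"

end

theory Submission
  imports Defs
begin

lemma act_cont_comp:
  assumes "continuous_on UNIV (\<lambda>p. act (fst p) (snd p))"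
    and "continuous_on S a" and "continuous_on S b"
  shows "continuous_on S (\<lambda>s. act (a s) (b s))"
proof -
  have "continuous_on S ((\<lambda>p. act (fst p) (snd p)) \<circ> (\<lambda>s. (a s, b s)))"
    by (rule continuous_on_compose[OF continuous_on_Pair[OF assms(2,3)]])
       (rule continuous_on_subset[OF assms(1)], simp)
  then show ?thesis by (simp add: o_def)
qed

theorem mainTheorem2:
  fixes act :: "'e::t2_space \<Rightarrow> 'g::{topological_group_add, second_countable_topology} \<Rightarrow> 'e"
    and \<phi> :: "'t::banach \<Rightarrow> 'g"
    and V Eperp :: "'t set" and W :: "'g set" and U I K :: "'e set" and J0 :: 'e
  assumes I_closed: "closed I"
    and act_cont: "continuous_on UNIV (\<lambda>p. act (fst p) (snd p))"
    and act_id: "\<And>J. act J 0 = J"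
    and act_comp: "\<And>J g h. act (act J g) h = act J (g + h)"
    and act_I: "\<And>J g. J \<in> I \<Longrightarrow> act J g \<in> I"
    and J0_I: "J0 \<in> I"
    and V_open: "open V" and V_conn: "connected V" and V_0: "0 \<in> V"
    and W_open: "open W" and W_conn: "connected W" and W_0: "0 \<in> W"
    and phi_homeo: "\<exists>\<psi>. homeomorphism V W \<phi> \<psi>" and phi_0: "\<phi> 0 = 0"
    and U_open: "open U" and U_conn: "connected U" and J0_U: "J0 \<in> U"
    and Eperp_sub: "subspace Eperp" and Eperp_closed: "closed Eperp"
    and J0_K: "J0 \<in> K" and K_sub: "K \<subseteq> U \<inter> I"
    and Phi_iso: "\<exists>\<Psi>. homeomorphism ((Eperp \<inter> V) \<times> K) (U \<inter> I) (PhiMap act \<phi>) \<Psi>"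
  shows "(\<forall>\<epsilon>>0. \<forall>c :: real \<Rightarrow> 'g.
            continuous_on {0..<\<epsilon>} c \<longrightarrow> c 0 = 0 \<longrightarrow>
            (\<forall>t\<in>{0..<\<epsilon>}. act J0 (c t) \<in> U) \<longrightarrow>
            (\<forall>t\<in>{0..<\<epsilon>}. Xi act \<phi> Eperp V K (act J0 (c t)) = J0))
     \<longleftrightarrow>
         (\<exists>W'. open W' \<and> connected W' \<and> 0 \<in> W' \<and> W' \<subseteq> W \<and>
            (\<forall>g\<in>W'. act J0 g \<in> K \<longrightarrow> act J0 g = J0))"
proof -
  obtain \<psi> where hpsi: "homeomorphism V W \<phi> \<psi>" using phi_homeo by blast
  obtain \<Psi> where hPsi: "homeomorphism ((Eperp \<inter> V) \<times> K) (U \<inter> I) (PhiMap act \<phi>) \<Psi>"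
    using Phi_iso by blast
  define D where "D = (Eperp \<inter> V) \<times> K"
  have phicont: "continuous_on V \<phi>" using hpsi by (simp add: homeomorphism_def)
  have phiW: "\<phi> ` V = W" using hpsi by (simp add: homeomorphism_def)
  have Psicont: "continuous_on (U \<inter> I) \<Psi>" using hPsi by (simp add: homeomorphism_def)
  have PsiD: "\<And>y. y \<in> U \<inter> I \<Longrightarrow> \<Psi> y \<in> D" using hPsi unfolding D_def homeomorphism_def by blast
  have PhiPsi: "\<And>y. y \<in> U \<inter> I \<Longrightarrow> PhiMap act \<phi> (\<Psi> y) = y" using hPsi by (simp add: homeomorphism_def)
  have injPhi: "inj_on (PhiMap act \<phi>) D" using hPsi unfolding D_def
    by (metis homeomorphism_apply1 inj_on_inverseI)
  have XiPsi: "Xi act \<phi> Eperp V K y = snd (\<Psi> y)" if "y \<in> U \<inter> I" for y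
  proof -
    have "inv_into D (PhiMap act \<phi>) (PhiMap act \<phi> (\<Psi> y)) = \<Psi> y"
      using inv_into_f_f[OF injPhi PsiD[OF that]] .
    then show ?thesis using PhiPsi[OF that] unfolding Xi_def D_def by simp
  qed
  have XiK: "Xi act \<phi> Eperp V K J = J" if "J \<in> K" for J
  proof -
    have "(0, J) \<in> D" using that V_0 Eperp_sub unfolding D_def by (simp add: subspace_0)
    moreover have "PhiMap act \<phi> (0, J) = J" by (simp add: PhiMap_def phi_0 act_id)
    ultimately show ?thesis unfolding Xi_def D_def[symmetric]
      using inv_into_f_f[OF injPhi] by (metis snd_conv)
  qed
  show ?thesis
  proof
    assume MC1: "\<forall>\<epsilon>>0. \<forall>c :: real \<Rightarrow> 'g.
            continuous_on {0..<\<epsilon>} c \<longrightarrow> c 0 = 0 \<longrightarrow>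
            (\<forall>t\<in>{0..<\<epsilon>}. act J0 (c t) \<in> U) \<longrightarrow>
            (\<forall>t\<in>{0..<\<epsilon>}. Xi act \<phi> Eperp V K (act J0 (c t)) = J0)"
    have fcont: "continuous_on V (\<lambda>\<xi>. act J0 (\<phi> \<xi>))"
      by (rule act_cont_comp[OF act_cont continuous_on_const phicont])
    have "open (V \<inter> (\<lambda>\<xi>. act J0 (\<phi> \<xi>)) -` U)"
      using continuous_open_preimage[OF fcont V_open U_open] by (simp add: Int_commute vimage_def)
    moreover have "0 \<in> V \<inter> (\<lambda>\<xi>. act J0 (\<phi> \<xi>)) -` U" using V_0 J0_U by (simp add: phi_0 act_id)
    ultimately obtain r where r: "r > 0" "ball 0 r \<subseteq> V \<inter> (\<lambda>\<xi>. act J0 (\<phi> \<xi>)) -` U"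
      by (meson open_contains_ball)
    define W' where "W' = \<phi> ` ball 0 r"
    have "openin (top_of_set W) W'"
      unfolding W'_def
      by (rule homeomorphism_imp_open_map[OF hpsi]) (use r in \<open>auto intro: open_subset\<close>)
    hence oW': "open W'" using W_open openin_open_trans by blast
    have cW': "connected W'" unfolding W'_def
      by (rule connected_continuous_image[OF continuous_on_subset[OF phicont]]) (use r in auto)
    have sW': "W' \<subseteq> W" using r phiW unfolding W'_def by auto
    have zW': "0 \<in> W'" unfolding W'_def using r phi_0 by (metis centre_in_ball imageI)
    have "\<forall>g\<in>W'. act J0 g \<in> K \<longrightarrow> act J0 g = J0"
    proof (intro ballI impI)
      fix g assume gW: "g \<in> W'" and gK: "act J0 g \<in> K"
      then obtain \<xi> where \<xi>: "\<xi> \<in> ball 0 r" "g = \<phi> \<xi>" unfolding W'_def by auto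
      define c where "c = (\<lambda>t::real. \<phi> (min t 1 *\<^sub>R \<xi>))"
      have inball: "min t 1 *\<^sub>R \<xi> \<in> ball 0 r" if "t \<in> {0..<2}" for t
      proof -
        have "norm (min t 1 *\<^sub>R \<xi>) = \<bar>min t 1\<bar> * norm \<xi>" by simp
        also have "\<dots> \<le> norm \<xi>" using that by (auto intro: mult_left_le_one_le)
        also have "\<dots> < r" using \<xi> by simp
        finally show ?thesis by simp
      qed
      have "continuous_on {0..<2} c" unfolding c_def
        apply (rule continuous_on_compose2[OF phicont])
         apply (intro continuous_intros)
        using inball r by auto
      moreover have "c 0 = 0" by (simp add: c_def phi_0)
      moreover have "\<forall>t\<in>{0..<2}. act J0 (c t) \<in> U"
      proof
        fix t :: real assume "t \<in> {0..<2}"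
        then have "min t 1 *\<^sub>R \<xi> \<in> ball 0 r" by (rule inball)
        then show "act J0 (c t) \<in> U" using r(2) unfolding c_def by blast
      qed
      ultimately have "Xi act \<phi> Eperp V K (act J0 (c 1)) = J0"
        using MC1[rule_format, of 2 c 1] by simp
      moreover have "c 1 = g" using \<xi> by (simp add: c_def)
      ultimately show "act J0 g = J0" using XiK[OF gK] by simp
    qed
    then show "\<exists>W'. open W' \<and> connected W' \<and> 0 \<in> W' \<and> W' \<subseteq> W \<and>
            (\<forall>g\<in>W'. act J0 g \<in> K \<longrightarrow> act J0 g = J0)"
      using oW' cW' zW' sW' by blast
  next
    assume "\<exists>W'. open W' \<and> connected W' \<and> 0 \<in> W' \<and> W' \<subseteq> W \<and>
            (\<forall>g\<in>W'. act J0 g \<in> K \<longrightarrow> act J0 g = J0)"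
    then obtain W' where oW': "open W'" and zW': "0 \<in> W'"
      and MC2: "\<And>g. g \<in> W' \<Longrightarrow> act J0 g \<in> K \<Longrightarrow> act J0 g = J0" by blast
    show "\<forall>\<epsilon>>0. \<forall>c :: real \<Rightarrow> 'g.
            continuous_on {0..<\<epsilon>} c \<longrightarrow> c 0 = 0 \<longrightarrow>
            (\<forall>t\<in>{0..<\<epsilon>}. act J0 (c t) \<in> U) \<longrightarrow>
            (\<forall>t\<in>{0..<\<epsilon>}. Xi act \<phi> Eperp V K (act J0 (c t)) = J0)"
    proof (intro allI impI)
      fix \<epsilon> :: real and c :: "real \<Rightarrow> 'g"
      assume \<epsilon>: "\<epsilon> > 0" and cc: "continuous_on {0..<\<epsilon>} c" and c0: "c 0 = 0"
        and cU: "\<forall>t\<in>{0..<\<epsilon>}. act J0 (c t) \<in> U"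
      define S where "S = {0..<\<epsilon>}"
      define y where "y = (\<lambda>s. act J0 (c s))"
      have yUI: "y s \<in> U \<inter> I" if "s \<in> S" for s
        using cU that act_I[OF J0_I] unfolding S_def y_def by auto
      have ycont: "continuous_on S y" unfolding y_def S_def
        by (rule act_cont_comp[OF act_cont continuous_on_const cc])
      have Psiycont: "continuous_on S (\<lambda>s. \<Psi> (y s))"
        by (rule continuous_on_compose2[OF Psicont ycont]) (use yUI in auto)
      define k where "k = (\<lambda>s. snd (\<Psi> (y s)))"
      define \<xi> where "\<xi> = (\<lambda>s. fst (\<Psi> (y s)))"
      have kcont: "continuous_on S k" unfolding k_def by (intro continuous_intros Psiycont)
      have \<xi>cont: "continuous_on S \<xi>" unfolding \<xi>_def by (intro continuous_intros Psiycont)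
      have \<xi>V: "\<xi> s \<in> V" if "s \<in> S" for s using PsiD[OF yUI[OF that]] unfolding \<xi>_def D_def
        by (auto simp: mem_Times_iff)
      define h where "h = (\<lambda>s. c s + - \<phi> (\<xi> s))"
      have hcont: "continuous_on S h" unfolding h_def
        apply (intro continuous_on_add continuous_on_minus)
        using cc apply (simp add: S_def)
        by (rule continuous_on_compose2[OF phicont \<xi>cont]) (use \<xi>V in auto)
      have kh: "k s = act J0 (h s)" if "s \<in> S" for s
      proof -
        have "y s = act (k s) (\<phi> (\<xi> s))"
          using PhiPsi[OF yUI[OF that]] unfolding k_def \<xi>_def PhiMap_def
          by (metis (mono_tags, lifting) case_prod_beta)
        hence "act (y s) (- \<phi> (\<xi> s)) = k s" by (simp add: act_comp act_id)
        moreover have "act (y s) (- \<phi> (\<xi> s)) = act J0 (h s)" by (simp add: y_def h_def act_comp)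
        ultimately show ?thesis by simp
      qed
      have kK: "k s \<in> K" if "s \<in> S" for s using PsiD[OF yUI[OF that]] unfolding k_def D_def
        by (auto simp: mem_Times_iff)
      have XiK': "Xi act \<phi> Eperp V K (y s) = k s" if "s \<in> S" for s
        using XiPsi[OF yUI[OF that]] by (simp add: k_def)
      define T where "T = {s \<in> S. k s = J0}"
      have Tclosed: "closedin (top_of_set S) T"
        unfolding T_def by (rule continuous_closedin_preimage_constant[OF kcont])
      have Topen: "openin (top_of_set S) T"
      proof (rule openin_subopen[THEN iffD2], intro ballI)
        fix s0 assume s0: "s0 \<in> T"
        define g0 where "g0 = h s0"
        have s0S: "s0 \<in> S" and ks0: "k s0 = J0" using s0 unfolding T_def by auto
        have g0J: "act J0 g0 = J0" using kh[OF s0S] ks0 unfolding g0_def by simp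
        have contd: "continuous_on S (\<lambda>s. - g0 + h s)"
          by (intro continuous_on_add continuous_on_const hcont)
        define N where "N = {s \<in> S. - g0 + h s \<in> W'}"
        have "openin (top_of_set S) N" unfolding N_def
          using continuous_openin_preimage_gen[OF contd oW'] by (simp add: Int_def vimage_def)
        moreover have "s0 \<in> N" using s0S zW' unfolding N_def g0_def by simp
        moreover have "N \<subseteq> T"
        proof
          fix s assume sN: "s \<in> N"
          hence sS: "s \<in> S" unfolding N_def by simp
          have "act J0 (- g0 + h s) = act (act J0 g0) (- g0 + h s)" using g0J by simp
          also have "\<dots> = act J0 (g0 + (- g0 + h s))" by (rule act_comp)
          also have "g0 + (- g0 + h s) = h s" by (simp add: add.assoc[symmetric])
          finally have "act J0 (- g0 + h s) = act J0 (h s)" .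
          also have "\<dots> = k s" using kh[OF sS] by simp
          finally have e: "act J0 (- g0 + h s) = k s" .
          have "- g0 + h s \<in> W'" using sN unfolding N_def by simp
          hence "act J0 (- g0 + h s) = J0" using MC2[of "- g0 + h s"] kK[OF sS] e by simp
          thus "s \<in> T" using e sS unfolding T_def by simp
        qed
        ultimately show "\<exists>T'. openin (top_of_set S) T' \<and> s0 \<in> T' \<and> T' \<subseteq> T" by blast
      qed
      have "0 \<in> T"
      proof -
        have "0 \<in> S" using \<epsilon> by (simp add: S_def)
        moreover have "y 0 = J0" by (simp add: y_def c0 act_id)
        ultimately show ?thesis using XiK'[of 0] XiK[OF J0_K] unfolding T_def by simp
      qed
      moreover have "connected S" unfolding S_def by (simp add: is_interval_connected)
      ultimately have "T = S" using Topen Tclosed connected_clopen by blast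
      then show "\<forall>t\<in>{0..<\<epsilon>}. Xi act \<phi> Eperp V K (act J0 (c t)) = J0"
        using XiK' unfolding T_def S_def y_def by auto
    qed
  qed
qed

end
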